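(* Let $V:\mathbb{C}^2\to\mathcal{H}_j$ be the encoding isometry of a spin code which is $\mathsf{X}$-covariant, i.e. $D^j(\mathsf{X})V=V\mathsf{X}$, and suppose the codewords $|\bar0\rangle=V|0\rangle$, $|\bar1\rangle=V|1\rangle$ are real (real coefficients in the basis $|j,m\rangle$). Then for all $0\le k\le 2j$, $-k\le q\le k$: $\langle\bar0|T^k_q|\bar0\rangle=(-1)^{q+k}\langle\bar1|T^k_q|\bar1\rangle$, $\langle\bar0|T^k_q|\bar1\rangle=(-1)^{q+k}\langle\bar0|T^k_q|\bar1\rangle$, and $\langle\bar1|T^k_q|\bar0\rangle=(-1)^{q+k}\langle\bar1|T^k_q|\bar0\rangle$.
   Context: $\mathcal{H}_j$ is the spin-$j$ irrep of $\mathrm{SU}(2)$ with orthonormal basis $|j,m\rangle$, $|m|\le j$ ($J_z$-eigenbasis), $D^j(g)$ the action of $g\in\mathrm{SU}(2)$, and $\mathsf{X}=\begin{pmatrix}0&-i\\-i&0\end{pmatrix}$. Spherical tensors: $T^k_q=\sqrt{\tfrac{2k+1}{2j+1}}\sum_m C^{j\,m+q}_{k\,q,\,j\,m}|j,m+q\rangle\langle j,m|$ with Clebsch–Gordan coefficients $C$. *)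

theory Defs
  imports Complex_Main
begin

text \<open>The spin is encoded by n = 2j (a natural number).  The basis vector
|j,m> of H_j is indexed by a = j + m, a in {0..n}; thus m = (2a - n)/2.
Vectors of H_j are functions nat => complex (only the values on {0..n} matter);
linear maps / matrices are functions nat => nat => complex (row, column).
2x2 matrices are nat => nat => complex with indices 0,1; C^2 has basis |0>, |1>
indexed by 0, 1.  Angular momentum quantum numbers in Clebsch-Gordan coefficients are
passed doubled (as integers), so that half-integers are represented exactly.\<close>

definition Xmat :: "nat \<Rightarrow> nat \<Rightarrow> complex" where
  "Xmat r c = (if (r = 0 \<and> c = 1) \<or> (r = 1 \<and> c = 0) then - \<i> else 0)"

text \<open>Spin-j representation D^j(g), realised on homogeneous polynomials of degree n = 2j
in x (= |0>, spin up) and y (= |1>): |j,m> corresponds to the normalised monomial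
x^(j+m) y^(j-m) / sqrt((j+m)! (j-m)!), and g acts by x |-> g00 x + g10 y,
y |-> g01 x + g11 y.  Entry (a', a) is the coefficient of |j, a'-j> in D^j(g) |j, a-j>.
(This gives the standard Condon-Shortley phase conventions.)\<close>
definition Dj :: "nat \<Rightarrow> (nat \<Rightarrow> nat \<Rightarrow> complex) \<Rightarrow> nat \<Rightarrow> nat \<Rightarrow> complex" where
  "Dj n g a' a =
     complex_of_real (sqrt (fact a' * fact (n - a') / (fact a * fact (n - a)))) *
     (\<Sum>s\<le>a. \<Sum>t\<le>n - a. if s + t = a' then
        of_nat (a choose s) * of_nat ((n - a) choose t) *
        g 0 0 ^ s * g 1 0 ^ (a - s) * g 0 1 ^ t * g 1 1 ^ (n - a - t) else 0)"

definition hfact :: "int \<Rightarrow> real" where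
  "hfact x = fact (nat (x div 2))"

text \<open>Clebsch-Gordan coefficient C^{J M}_{j1 m1, j2 m2} (Racah's formula), all arguments
doubled: cg tj1 tm1 tj2 tm2 tJ tM with tj1 = 2 j1 etc.  It is zero unless the quantum
numbers are admissible.\<close>
definition cg :: "int \<Rightarrow> int \<Rightarrow> int \<Rightarrow> int \<Rightarrow> int \<Rightarrow> int \<Rightarrow> real" where
  "cg tj1 tm1 tj2 tm2 tJ tM =
    (if tM = tm1 + tm2 \<and> 0 \<le> tj1 \<and> 0 \<le> tj2 \<and> 0 \<le> tJ
        \<and> \<bar>tm1\<bar> \<le> tj1 \<and> \<bar>tm2\<bar> \<le> tj2 \<and> \<bar>tM\<bar> \<le> tJ
        \<and> even (tj1 + tm1) \<and> even (tj2 + tm2) \<and> even (tJ + tM)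
        \<and> even (tj1 + tj2 + tJ)
        \<and> \<bar>tj1 - tj2\<bar> \<le> tJ \<and> tJ \<le> tj1 + tj2
     then
       sqrt ((of_int tJ + 1) * hfact (tJ + tj1 - tj2) * hfact (tJ - tj1 + tj2)
             * hfact (tj1 + tj2 - tJ) / hfact (tj1 + tj2 + tJ + 2))
       * sqrt (hfact (tJ + tM) * hfact (tJ - tM) * hfact (tj1 - tm1) * hfact (tj1 + tm1)
             * hfact (tj2 - tm2) * hfact (tj2 + tm2))
       * (\<Sum>s\<in>{s::int. 0 \<le> s \<and> 0 \<le> tj1 + tj2 - tJ - 2*s \<and> 0 \<le> tj1 - tm1 - 2*s
                  \<and> 0 \<le> tj2 + tm2 - 2*s \<and> 0 \<le> tJ - tj2 + tm1 + 2*s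
                  \<and> 0 \<le> tJ - tj1 - tm2 + 2*s}.
           (-1) powi s / (hfact (2*s) * hfact (tj1 + tj2 - tJ - 2*s) * hfact (tj1 - tm1 - 2*s)
              * hfact (tj2 + tm2 - 2*s) * hfact (tJ - tj2 + tm1 + 2*s)
              * hfact (tJ - tj1 - tm2 + 2*s)))
     else 0)"

text \<open>Spherical tensor T^k_q on H_j (n = 2j), entry (a', a) = <j, a'-j| T^k_q |j, a-j>:
T^k_q = sqrt((2k+1)/(2j+1)) sum_m C^{j,m+q}_{k q, j m} |j,m+q><j,m|.\<close>
definition Tkq :: "nat \<Rightarrow> nat \<Rightarrow> int \<Rightarrow> nat \<Rightarrow> nat \<Rightarrow> complex" where
  "Tkq n k q a' a =
     (if int a' = int a + q then
        complex_of_real (sqrt ((2 * real k + 1) / (real n + 1))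
          * cg (2 * int k) (2 * q) (int n) (2 * int a - int n) (int n) (2 * int a' - int n))
      else 0)"

definition melem :: "nat \<Rightarrow> nat \<Rightarrow> int \<Rightarrow> (nat \<Rightarrow> complex) \<Rightarrow> (nat \<Rightarrow> complex) \<Rightarrow> complex" where
  "melem n k q psi phi = (\<Sum>a'\<le>n. \<Sum>a\<le>n. cnj (psi a') * Tkq n k q a' a * phi a)"

end

theory Submission
  imports Defs
begin

lemma m1pow: "((-1::'a::field) powi n) = (if even n then 1 else -1)"
  by (simp add: power_int_minus_left)

lemma cg_cond: "(tM = 2*q + tm \<and> 0 \<le> 2*K \<and> 0 \<le> N \<and> 0 \<le> N
        \<and> \<bar>2*q\<bar> \<le> 2*K \<and> \<bar>tm\<bar> \<le> N \<and> \<bar>tM\<bar> \<le> N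
        \<and> even (2*K + 2*q) \<and> even (N + tm) \<and> even (N + tM)
        \<and> even (2*K + N + N)
        \<and> \<bar>2*K - N\<bar> \<le> N \<and> N \<le> 2*K + N) \<longleftrightarrow>
       (-tm = 2*q + -tM \<and> 0 \<le> 2*K \<and> 0 \<le> N \<and> 0 \<le> N
        \<and> \<bar>2*q\<bar> \<le> 2*K \<and> \<bar>-tM\<bar> \<le> N \<and> \<bar>-tm\<bar> \<le> N
        \<and> even (2*K + 2*q) \<and> even (N + -tM) \<and> even (N + -tm)
        \<and> even (2*K + N + N)
        \<and> \<bar>2*K - N\<bar> \<le> N \<and> N \<le> 2*K + N)" for tM q tm K N :: int
  by auto

lemma cg_sym:
  fixes K q tm tM N :: int
  shows "cg (2*K) (2*q) N tm N tM = (-1) powi (K - q) * cg (2*K) (2*q) N (-tM) N (-tm)"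
proof (cases "tM = 2*q + tm \<and> 0 \<le> 2*K \<and> 0 \<le> N
        \<and> \<bar>2*q\<bar> \<le> 2*K \<and> \<bar>tm\<bar> \<le> N \<and> \<bar>tM\<bar> \<le> N
        \<and> even (N + tm) \<and> even (N + tM)
        \<and> \<bar>2*K - N\<bar> \<le> N \<and> N \<le> 2*K + N")
  case False
  then show ?thesis unfolding cg_def by auto
next
  case True
  then have tM: "tM = 2*q + tm" by simp
  define S where "S = {s::int. 0 \<le> s \<and> 0 \<le> 2*K + N - N - 2*s \<and> 0 \<le> 2*K - 2*q - 2*s
                  \<and> 0 \<le> N + tm - 2*s \<and> 0 \<le> N - N + 2*q + 2*s
                  \<and> 0 \<le> N - 2*K - tm + 2*s}"
  define S' where "S' = {s::int. 0 \<le> s \<and> 0 \<le> 2*K + N - N - 2*s \<and> 0 \<le> 2*K - 2*q - 2*s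
                  \<and> 0 \<le> N + -tM - 2*s \<and> 0 \<le> N - N + 2*q + 2*s
                  \<and> 0 \<le> N - 2*K - -tM + 2*s}"
  define f where "f = (\<lambda>s. (-1::real) powi s / (hfact (2*s) * hfact (2*K + N - N - 2*s) * hfact (2*K - 2*q - 2*s)
              * hfact (N + tm - 2*s) * hfact (N - N + 2*q + 2*s)
              * hfact (N - 2*K - tm + 2*s)))"
  define g where "g = (\<lambda>s. (-1::real) powi s / (hfact (2*s) * hfact (2*K + N - N - 2*s) * hfact (2*K - 2*q - 2*s)
              * hfact (N + -tM - 2*s) * hfact (N - N + 2*q + 2*s)
              * hfact (N - 2*K - -tM + 2*s)))"
  have sumeq: "sum f S = (-1) powi (K - q) * sum g S'"
    unfolding sum_distrib_left
  proof (rule sum.reindex_bij_witness[of _ "\<lambda>s. K - q - s" "\<lambda>s. K - q - s"])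
    show "\<And>a. a \<in> S \<Longrightarrow> K - q - (K - q - a) = a" by simp
    show "\<And>a. a \<in> S' \<Longrightarrow> K - q - (K - q - a) = a" by simp
    show "\<And>a. a \<in> S \<Longrightarrow> K - q - a \<in> S'" unfolding S_def S'_def using tM by auto
    show "\<And>a. a \<in> S' \<Longrightarrow> K - q - a \<in> S" unfolding S_def S'_def using tM by auto
    fix s assume "s \<in> S"
    have e1: "2 * (K - q - s) = 2*K - 2*q - 2*s" by simp
    have e2: "2*K + N - N - 2*(K - q - s) = N - N + 2*q + 2*s" by simp
    have e3: "2*K - 2*q - 2*(K - q - s) = 2*s" by simp
    have e4: "N + -tM - 2*(K - q - s) = N - 2*K - tm + 2*s" using tM by simp
    have e5: "N - N + 2*q + 2*(K - q - s) = 2*K + N - N - 2*s" by simp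
    have e6: "N - 2*K - -tM + 2*(K - q - s) = N + tm - 2*s" using tM by simp
    have x1: "N + (tm - s * 2) = N + tm - s * 2" by simp
    have x2: "N + (s * 2 - K * 2 - tm) = N - K * 2 - tm + s * 2" by simp
    have p: "(-1::real) powi (K - q) * (-1) powi (K - q - s) = (-1) powi s"
      by (simp add: m1pow)
    show "(-1) powi (K - q) * g (K - q - s) = f s"
      unfolding f_def g_def
      apply (simp only: e1 e2 e3 e4 e5 e6)
      apply (simp add: p[symmetric] mult_ac)
      apply (rule disjI2)+
      using tM apply simp
      apply (simp only: x1 x2)
      done
  qed
  have L: "cg (2*K) (2*q) N tm N tM = sqrt ((of_int (N) + 1) * hfact ((N) + (2*K) - (N)) * hfact ((N) - (2*K) + (N))
             * hfact ((2*K) + (N) - (N)) / hfact ((2*K) + (N) + (N) + 2))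
       * sqrt (hfact ((N) + (tM)) * hfact ((N) - (tM)) * hfact ((2*K) - (2*q)) * hfact ((2*K) + (2*q))
             * hfact ((N) - (tm)) * hfact ((N) + (tm)))
       * (\<Sum>s\<in>{s::int. 0 \<le> s \<and> 0 \<le> (2*K) + (N) - (N) - 2*s \<and> 0 \<le> (2*K) - (2*q) - 2*s
                  \<and> 0 \<le> (N) + (tm) - 2*s \<and> 0 \<le> (N) - (N) + (2*q) + 2*s
                  \<and> 0 \<le> (N) - (2*K) - (tm) + 2*s}.
           (-1) powi s / (hfact (2*s) * hfact ((2*K) + (N) - (N) - 2*s) * hfact ((2*K) - (2*q) - 2*s)
              * hfact ((N) + (tm) - 2*s) * hfact ((N) - (N) + (2*q) + 2*s)
              * hfact ((N) - (2*K) - (tm) + 2*s)))"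
    unfolding cg_def by (rule if_P) (use True in auto)
  have R: "cg (2*K) (2*q) N (-tM) N (-tm) = sqrt ((of_int (N) + 1) * hfact ((N) + (2*K) - (N)) * hfact ((N) - (2*K) + (N))
             * hfact ((2*K) + (N) - (N)) / hfact ((2*K) + (N) + (N) + 2))
       * sqrt (hfact ((N) + (-tm)) * hfact ((N) - (-tm)) * hfact ((2*K) - (2*q)) * hfact ((2*K) + (2*q))
             * hfact ((N) - (-tM)) * hfact ((N) + (-tM)))
       * (\<Sum>s\<in>{s::int. 0 \<le> s \<and> 0 \<le> (2*K) + (N) - (N) - 2*s \<and> 0 \<le> (2*K) - (2*q) - 2*s
                  \<and> 0 \<le> (N) + (-tM) - 2*s \<and> 0 \<le> (N) - (N) + (2*q) + 2*s
                  \<and> 0 \<le> (N) - (2*K) - (-tM) + 2*s}.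
           (-1) powi s / (hfact (2*s) * hfact ((2*K) + (N) - (N) - 2*s) * hfact ((2*K) - (2*q) - 2*s)
              * hfact ((N) + (-tM) - 2*s) * hfact ((N) - (N) + (2*q) + 2*s)
              * hfact ((N) - (2*K) - (-tM) + 2*s)))"
    unfolding cg_def by (rule if_P) (use True in auto)
  have B: "hfact (N + tM) * hfact (N - tM) * hfact (2*K - 2*q) * hfact (2*K + 2*q)
             * hfact (N - tm) * hfact (N + tm) = hfact (N + - tm) * hfact (N - - tm) * hfact (2*K - 2*q) * hfact (2*K + 2*q)
             * hfact (N - - tM) * hfact (N + - tM)" by (simp add: mult_ac)
  show ?thesis
    unfolding L R
    using sumeq unfolding S_def S'_def f_def g_def B
    by (simp add: mult_ac)
qed



lemma Tkq_flip:
  assumes "b \<le> n" "b' \<le> n"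
  shows "Tkq n k q (n - b') (n - b) = (-1) powi (q + int k) * Tkq n k q b b'"
proof (cases "int b = int b' + q")
  case False
  then have c: "int (n - b') \<noteq> int (n - b) + q" using assms by auto
  show ?thesis unfolding Tkq_def using False c by simp
next
  case True
  then have c: "int (n - b') = int (n - b) + q" using assms by auto
  have a1: "2 * int (n - b) - int n = int n - 2 * int b" using assms by simp
  have a2: "2 * int (n - b') - int n = int n - 2 * int b'" using assms by simp
  have a3: "2 * int b' - int n = - (int n - 2 * int b')" by simp
  have a4: "2 * int b - int n = - (int n - 2 * int b)" by simp
  have s: "(-1::real) powi (int k - q) = (-1) powi (q + int k)" by (simp add: m1pow)
  have s2: "complex_of_real ((-1::real) powi (q + int k)) = (-1) powi (q + int k)" by (simp add: m1pow)
  have cg: "cg (2 * int k) (2 * q) (int n) (int n - 2 * int b) (int n) (int n - 2 * int b')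
     = (-1) powi (q + int k) * cg (2 * int k) (2 * q) (int n) (- (int n - 2 * int b')) (int n) (- (int n - 2 * int b))"
    using cg_sym[of "int k" q "int n" "int n - 2 * int b" "int n - 2 * int b'"] s by simp
  have "Tkq n k q (n - b') (n - b) = complex_of_real (sqrt ((2 * real k + 1) / (real n + 1))
          * cg (2 * int k) (2 * q) (int n) (int n - 2 * int b) (int n) (int n - 2 * int b'))"
    unfolding Tkq_def a1 a2 using c by simp
  also have "... = complex_of_real ((-1::real) powi (q + int k)) * complex_of_real (sqrt ((2 * real k + 1) / (real n + 1))
          * cg (2 * int k) (2 * q) (int n) (- (int n - 2 * int b')) (int n) (- (int n - 2 * int b)))"
    unfolding cg of_real_mult[symmetric] by (simp only: mult_ac)
  also have "... = (-1) powi (q + int k) * Tkq n k q b b'"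
    unfolding Tkq_def s2 a3[symmetric] a4[symmetric] using True by simp
  finally show ?thesis .
qed

lemma Dj_X:
  assumes "a \<le> n"
  shows "Dj n Xmat a' a = (if a' = n - a then (- \<i>) ^ n else 0)"
proof -
  have inner: "(\<Sum>s\<le>a. \<Sum>t\<le>n - a. if s + t = a' then
        of_nat (a choose s) * of_nat ((n - a) choose t) *
        Xmat 0 0 ^ s * Xmat 1 0 ^ (a - s) * Xmat 0 1 ^ t * Xmat 1 1 ^ (n - a - t) else 0)
      = (\<Sum>s\<le>a. \<Sum>t\<le>n - a. if s = 0 \<and> t = n - a \<and> a' = n - a then (- \<i>) ^ n else 0)"
  proof (intro sum.cong refl)
    fix s t assume st: "s \<in> {..a}" "t \<in> {..n-a}"
    show "(if s + t = a' then
        of_nat (a choose s) * of_nat ((n - a) choose t) *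
        Xmat 0 0 ^ s * Xmat 1 0 ^ (a - s) * Xmat 0 1 ^ t * Xmat 1 1 ^ (n - a - t) else 0)
       = (if s = 0 \<and> t = n - a \<and> a' = n - a then (- \<i>) ^ n else 0)"
    proof (cases "s = 0 \<and> t = n - a")
      case True
      then show ?thesis using assms by (auto simp: Xmat_def power_add[symmetric])
    next
      case False
      then have "s \<noteq> 0 \<or> n - a - t \<noteq> 0" using st by auto
      then show ?thesis by (auto simp: Xmat_def)
    qed
  qed
  have "(\<Sum>s\<le>a. \<Sum>t\<le>n - a. if s = 0 \<and> t = n - a \<and> a' = n - a then (- \<i>) ^ n else 0)
      = (if a' = n - a then (- \<i>) ^ n else 0)"
  proof -
    have "(\<Sum>s\<le>a. \<Sum>t\<le>n - a. if s = 0 \<and> t = n - a \<and> a' = n - a then (- \<i>) ^ n else 0)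
       = (\<Sum>s\<le>a. if s = 0 then (\<Sum>t\<le>n - a. if t = n - a then (if a' = n - a then (- \<i>) ^ n else 0) else (0::complex)) else 0)"
      by (intro sum.cong) auto
    also have "... = (if a' = n - a then (- \<i>) ^ n else 0)"
      by (simp only: sum.delta finite_atMost) simp
    finally show ?thesis .
  qed
  then show ?thesis unfolding Dj_def inner using assms by auto
qed

lemma sum_rev_atMost: "(\<Sum>a\<le>(n::nat). f a) = (\<Sum>b\<le>n. f (n - b))"
  by (rule sum.reindex_bij_witness[where i="\<lambda>i. n - i" and j="\<lambda>i. n - i"]) (simp_all add: atMost_iff)

lemma melem_flip:
  fixes z :: complex
  assumes psi: "\<forall>a\<le>n. psi a = z * psi' (n - a)"
    and phi: "\<forall>a\<le>n. phi a = z * phi' (n - a)"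
    and rpsi: "\<forall>a\<le>n. psi a \<in> \<real>"
    and rphi': "\<forall>a\<le>n. phi' a \<in> \<real>"
    and z2: "z * z = 1"
  shows "melem n k q psi phi = (-1) powi (q + int k) * melem n k q phi' psi'"
proof -
  have "melem n k q psi phi = (\<Sum>a'\<le>n. \<Sum>a\<le>n. psi' (n - a') * Tkq n k q a' a * phi' (n - a))"
    unfolding melem_def
  proof (intro sum.cong refl)
    fix a' a assume "a' \<in> {..n}" "a \<in> {..n}"
    then have "a' \<le> n" "a \<le> n" by auto
    have "cnj (psi a') = psi a'" using rpsi \<open>a' \<le> n\<close> Reals_cnj_iff by blast
    then show "cnj (psi a') * Tkq n k q a' a * phi a = psi' (n - a') * Tkq n k q a' a * phi' (n - a)"
      using psi phi \<open>a' \<le> n\<close> \<open>a \<le> n\<close> z2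
      by (simp add: mult_ac)
  qed
  also have "... = (\<Sum>b'\<le>n. \<Sum>b\<le>n. psi' b' * Tkq n k q (n - b') (n - b) * phi' b)"
  proof -
    have "(\<Sum>b'\<le>n. \<Sum>b\<le>n. psi' b' * Tkq n k q (n - b') (n - b) * phi' b)
       = (\<Sum>a'\<le>n. \<Sum>b\<le>n. psi' (n - a') * Tkq n k q (n - (n - a')) (n - b) * phi' b)"
      by (rule sum_rev_atMost)
    also have "... = (\<Sum>a'\<le>n. \<Sum>a\<le>n. psi' (n - a') * Tkq n k q (n - (n - a')) (n - (n - a)) * phi' (n - a))"
      by (rule sum.cong[OF refl], rule sum_rev_atMost)
    also have "... = (\<Sum>a'\<le>n. \<Sum>a\<le>n. psi' (n - a') * Tkq n k q a' a * phi' (n - a))"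
      by (intro sum.cong refl) auto
    finally show ?thesis by simp
  qed
  also have "... = (\<Sum>b'\<le>n. \<Sum>b\<le>n. (-1) powi (q + int k) * (cnj (phi' b) * Tkq n k q b b' * psi' b'))"
  proof (intro sum.cong refl)
    fix b' b assume "b' \<in> {..n}" "b \<in> {..n}"
    then have "b' \<le> n" "b \<le> n" by auto
    have "cnj (phi' b) = phi' b" using rphi' \<open>b \<le> n\<close> Reals_cnj_iff by blast
    then show "psi' b' * Tkq n k q (n - b') (n - b) * phi' b = (-1) powi (q + int k) * (cnj (phi' b) * Tkq n k q b b' * psi' b')"
      using Tkq_flip[OF \<open>b \<le> n\<close> \<open>b' \<le> n\<close>] by (simp add: mult_ac)
  qed
  also have "... = (-1) powi (q + int k) * melem n k q phi' psi'"
    unfolding melem_def sum_distrib_left by (rule sum.swap)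
  finally show ?thesis .
qed

theorem lemmaS6:
  fixes n :: nat and V :: "nat \<Rightarrow> nat \<Rightarrow> complex"
  assumes isometry: "\<forall>c<2. \<forall>c'<2. (\<Sum>a\<le>n. cnj (V a c) * V a c') = (if c = c' then 1 else 0)"
    and covariant: "\<forall>a\<le>n. \<forall>c<2. (\<Sum>b\<le>n. Dj n Xmat a b * V b c) = (\<Sum>d<2. V a d * Xmat d c)"
    and real_codewords: "\<forall>a\<le>n. \<forall>c<2. V a c \<in> \<real>"
  shows "\<forall>k\<le>n. \<forall>q::int. - int k \<le> q \<and> q \<le> int k \<longrightarrow>
           melem n k q (\<lambda>a. V a 0) (\<lambda>a. V a 0) = (-1) powi (q + int k) * melem n k q (\<lambda>a. V a 1) (\<lambda>a. V a 1)
         \<and> melem n k q (\<lambda>a. V a 0) (\<lambda>a. V a 1) = (-1) powi (q + int k) * melem n k q (\<lambda>a. V a 0) (\<lambda>a. V a 1)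
         \<and> melem n k q (\<lambda>a. V a 1) (\<lambda>a. V a 0) = (-1) powi (q + int k) * melem n k q (\<lambda>a. V a 1) (\<lambda>a. V a 0)"
proof -
  define z where "z = \<i> * (- \<i>) ^ n"
  have cov: "(- \<i>) ^ n * V (n - a) c = - \<i> * V a (1 - c)" if "a \<le> n" "c < 2" for a c
  proof -
    have "(\<Sum>b\<le>n. Dj n Xmat a b * V b c) = (\<Sum>b\<le>n. if b = n - a then (- \<i>) ^ n * V b c else 0)"
    proof (intro sum.cong refl)
      fix b assume "b \<in> {..n}"
      then have "b \<le> n" by simp
      then have "(a = n - b) = (b = n - a)" using that by auto
      then show "Dj n Xmat a b * V b c = (if b = n - a then (- \<i>) ^ n * V b c else 0)"
        using Dj_X[OF \<open>b \<le> n\<close>, of a] by simp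
    qed
    also have "... = (- \<i>) ^ n * V (n - a) c" by (simp add: sum.delta)
    finally have l: "(\<Sum>b\<le>n. Dj n Xmat a b * V b c) = (- \<i>) ^ n * V (n - a) c" .
    have r: "(\<Sum>d<2. V a d * Xmat d c) = - \<i> * V a (1 - c)"
      using \<open>c < 2\<close> by (auto simp: numeral_2_eq_2 Xmat_def less_Suc_eq)
    show ?thesis using covariant that l r by simp
  qed
  have flip: "V a (1 - c) = z * V (n - a) c" if "a \<le> n" "c < 2" for a c
  proof -
    have "\<i> * ((- \<i>) ^ n * V (n - a) c) = \<i> * (- \<i> * V a (1 - c))" using cov[OF that] by simp
    then show ?thesis unfolding z_def by (simp add: mult_ac)
  qed
  have f1: "\<forall>a\<le>n. V a 1 = z * V (n - a) 0" using flip[of _ 0] by simp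
  have f0: "\<forall>a\<le>n. V a 0 = z * V (n - a) 1" using flip[of _ 1] by simp
  have zsq: "z * z = - ((-1) ^ n)" unfolding z_def
    by (simp add: power_mult_distrib[symmetric] mult_ac)
  obtain a where a: "a \<le> n" "V a 0 \<noteq> 0"
  proof -
    have "(\<Sum>a\<le>n. cnj (V a 0) * V a 0) = 1" using isometry by auto
    then have "\<exists>a\<in>{..n}. cnj (V a 0) * V a 0 \<noteq> 0"
      by (metis (no_types, lifting) sum.neutral zero_neq_one)
    then show ?thesis using that by auto
  qed
  have "V (n - a) 1 = z * V a 0" using f1 a(1) by (metis diff_diff_cancel diff_le_self f0 f1)
  then have "z = V (n - a) 1 / V a 0" using a by simp
  moreover have "V (n - a) 1 \<in> \<real>" "V a 0 \<in> \<real>" using real_codewords a(1) by auto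
  ultimately have "z \<in> \<real>" by simp
  then obtain r where r: "z = of_real r" by (auto elim: Reals_cases)
  have z2: "z * z = 1"
  proof (cases "even n")
    case True
    then have "of_real (r * r) = (-1::complex)" using zsq r by simp
    then have "r * r = -1" by (metis of_real_eq_iff of_real_minus of_real_1)
    moreover have "r * r \<ge> 0" by simp
    ultimately show ?thesis by simp
  next
    case False
    then show ?thesis using zsq by simp
  qed
  have r0: "\<forall>a\<le>n. V a 0 \<in> \<real>" and r1: "\<forall>a\<le>n. V a 1 \<in> \<real>" using real_codewords by auto
  show ?thesis
  proof (intro allI impI conjI)
    fix k q
    show "melem n k q (\<lambda>a. V a 0) (\<lambda>a. V a 0) = (-1) powi (q + int k) * melem n k q (\<lambda>a. V a 1) (\<lambda>a. V a 1)"
      by (rule melem_flip) (use f0 r0 r1 z2 in auto)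
    show "melem n k q (\<lambda>a. V a 0) (\<lambda>a. V a 1) = (-1) powi (q + int k) * melem n k q (\<lambda>a. V a 0) (\<lambda>a. V a 1)"
      by (rule melem_flip) (use f0 f1 r0 r1 z2 in auto)
    show "melem n k q (\<lambda>a. V a 1) (\<lambda>a. V a 0) = (-1) powi (q + int k) * melem n k q (\<lambda>a. V a 1) (\<lambda>a. V a 0)"
      by (rule melem_flip) (use f0 f1 r0 r1 z2 in auto)
  qed
qed

end
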